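(* Assume Assumption A1 and let $I\subset\mathbb{R}$ be a bounded Borel set. Then for every $\varepsilon>0$ there exist $s_\varepsilon\in(0,1/2)$ and $L_\varepsilon\in\mathbb{N}$ such that for all $s\in(0,s_\varepsilon)$, $E\in I$, $L\ge L_\varepsilon$, and $x\in\mathcal{T}_L$ with $\mathrm{dist}(0,x)\ge L_\varepsilon$, $$\ln\mathbb{E}\big[|\langle\delta_0,(H_{\mathcal{T}_L}-E)^{-1}\delta_x\rangle|^s\big]\le\varepsilon\,\mathrm{dist}(0,x)+s\,\mathbb{E}\big[\ln|\langle\delta_0,(H_{\mathcal{T}_L}-E)^{-1}\delta_x\rangle|\big].$$
   Context: $\mathcal{T}$ is the rooted tree in which every vertex has $K\ge2$ neighbors away from the root $0$; $\mathcal{T}_L=\{x:\mathrm{dist}(0,x)\le L\}$. $H_{\mathcal{T}_L}=A+V+B$ on $\ell^2(\mathcal{T}_L)$ with $A$ the adjacency operator, $V$ multiplication by i.i.d. random $\omega_x$, $B$ multiplication by a fixed $b\in\mathbb{R}$ on $\{x:\mathrm{dist}(0,x)=L\}$. Assumption A1: the single-site distribution has a bounded density $\varrho$ with $\int|\omega|^\tau\varrho\,d\omega<\infty$ for some $\tau>0$. *)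

theory Defs
  imports "HOL-Probability.Probability"
begin

text \<open>Vertices of the rooted tree with K children per vertex: words over {0..<K};
  the root 0 is the empty word, the children of x are i # x (i < K),
  and dist(0,x) = length x.\<close>

definition tree_ball :: "nat \<Rightarrow> nat \<Rightarrow> nat list set" where
  "tree_ball K L = {xs. set xs \<subseteq> {..<K} \<and> length xs \<le> L}"

definition tree_adj :: "nat list \<Rightarrow> nat list \<Rightarrow> bool" where
  "tree_adj x y \<longleftrightarrow> (\<exists>i. y = i # x \<or> x = i # y)"

definition tree_dist0 :: "nat list \<Rightarrow> nat" where
  "tree_dist0 x = length x"

definition ham :: "nat \<Rightarrow> nat \<Rightarrow> real \<Rightarrow> (nat list \<Rightarrow> real) \<Rightarrow> (nat list \<Rightarrow> real) \<Rightarrow> nat list \<Rightarrow> real" where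
  "ham K L b \<omega> \<psi> y =
     (\<Sum>z\<in>tree_ball K L. if tree_adj y z then \<psi> z else 0)
     + \<omega> y * \<psi> y + (if tree_dist0 y = L then b * \<psi> y else 0)"

text \<open>Green function  < delta_0, (H - E)^{-1} delta_x >  : the value at the root of the
  unique solution psi (supported on T_L) of (H - E) psi = delta_x.\<close>
definition green :: "nat \<Rightarrow> nat \<Rightarrow> real \<Rightarrow> (nat list \<Rightarrow> real) \<Rightarrow> real \<Rightarrow> nat list \<Rightarrow> real" where
  "green K L b \<omega> E x =
     (THE \<psi>. (\<forall>y. y \<notin> tree_ball K L \<longrightarrow> \<psi> y = 0) \<and>
             (\<forall>y\<in>tree_ball K L. ham K L b \<omega> \<psi> y - E * \<psi> y = (if y = x then 1 else 0))) []"

definition assumption_A1 :: "(real \<Rightarrow> real) \<Rightarrow> bool" where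
  "assumption_A1 \<rho> \<longleftrightarrow>
     \<rho> \<in> borel_measurable borel \<and> (\<forall>t. 0 \<le> \<rho> t) \<and>
     (\<integral>\<^sup>+ t. ennreal (\<rho> t) \<partial>lborel) = 1 \<and>
     (\<exists>C. \<forall>t. \<rho> t \<le> C) \<and>
     (\<exists>\<tau>>0. integrable lborel (\<lambda>t. \<bar>t\<bar> powr \<tau> * \<rho> t))"

definition pot_measure :: "(real \<Rightarrow> real) \<Rightarrow> nat \<Rightarrow> nat \<Rightarrow> (nat list \<Rightarrow> real) measure" where
  "pot_measure \<rho> K L = PiM (tree_ball K L) (\<lambda>_. density lborel (\<lambda>t. ennreal (\<rho> t)))"

end

theory Submission
  imports Defs
begin

fun gam :: "nat \<Rightarrow> real \<Rightarrow> real \<Rightarrow> (nat list \<Rightarrow> real) \<Rightarrow> nat \<Rightarrow> nat list \<Rightarrow> real" where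
  "gam K b E \<omega> 0 y = 1 / (\<omega> y + b - E)"
| "gam K b E \<omega> (Suc n) y = 1 / (\<omega> y - E - (\<Sum>i<K. gam K b E \<omega> n (i#y)))"

definition den :: "nat \<Rightarrow> real \<Rightarrow> real \<Rightarrow> (nat list \<Rightarrow> real) \<Rightarrow> nat \<Rightarrow> nat list \<Rightarrow> real" where
  "den K b E \<omega> n y = (case n of 0 \<Rightarrow> \<omega> y + b - E | Suc m \<Rightarrow> \<omega> y - E - (\<Sum>i<K. gam K b E \<omega> m (i#y)))"

lemma gam_den: "gam K b E \<omega> n y = 1 / den K b E \<omega> n y"
  by (cases n) (auto simp: den_def)

lemma finite_tree_ball: "finite (tree_ball K L)"
proof -
  have "tree_ball K L = {xs. set xs \<subseteq> {..<K} \<and> length xs \<le> L}" by (simp add: tree_ball_def)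
  thus ?thesis using finite_lists_length_le[of "{..<K}" L] by simp
qed

lemma nbsum:
  assumes y: "y \<in> tree_ball K L"
  shows "(\<Sum>z\<in>tree_ball K L. if tree_adj y z then \<psi> z else 0)
     = (if y = [] then 0 else \<psi> (tl y)) + (if length y < L then (\<Sum>i<K. \<psi> (i#y)) else 0)"
proof -
  define P where "P = (if y = [] then {} else {tl y})"
  define C where "C = (if length y < L then (\<lambda>i. i#y) ` {..<K} else {})"
  have eq: "{z\<in>tree_ball K L. tree_adj y z} = P \<union> C"
  proof (intro set_eqI iffI)
    fix z assume "z \<in> {z\<in>tree_ball K L. tree_adj y z}"
    then obtain i where z: "z \<in> tree_ball K L" "z = i # y \<or> y = i # z"
      by (auto simp: tree_adj_def)
    then show "z \<in> P \<union> C" using y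
      by (auto simp: P_def C_def tree_ball_def)
  next
    fix z assume "z \<in> P \<union> C"
    then show "z \<in> {z\<in>tree_ball K L. tree_adj y z}" using y
      by (cases y) (auto simp: P_def C_def tree_ball_def tree_adj_def split: if_splits)
  qed
  have "(\<Sum>z\<in>tree_ball K L. if tree_adj y z then \<psi> z else 0) = sum \<psi> {z\<in>tree_ball K L. tree_adj y z}"
    by (simp add: sum.inter_filter finite_tree_ball)
  also have "\<dots> = sum \<psi> P + sum \<psi> C"
    unfolding eq by (rule sum.union_disjoint) (auto simp: P_def C_def dest: arg_cong[of _ _ length])
  also have "sum \<psi> P = (if y = [] then 0 else \<psi> (tl y))" by (simp add: P_def)
  also have "sum \<psi> C = (if length y < L then (\<Sum>i<K. \<psi> (i#y)) else 0)"
    by (simp add: C_def sum.reindex inj_on_def)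
  finally show ?thesis .
qed

lemma ham_eq:
  assumes y: "y \<in> tree_ball K L"
  shows "ham K L b \<omega> \<psi> y = (if y = [] then 0 else \<psi> (tl y)) + (if length y < L then (\<Sum>i<K. \<psi> (i#y)) else 0)
     + \<omega> y * \<psi> y + (if length y = L then b * \<psi> y else 0)"
  unfolding ham_def nbsum[OF y] by (simp add: tree_dist0_def)

definition good :: "nat \<Rightarrow> nat \<Rightarrow> real \<Rightarrow> real \<Rightarrow> (nat list \<Rightarrow> real) \<Rightarrow> bool" where
  "good K L b E \<omega> \<longleftrightarrow> (\<forall>y\<in>tree_ball K L. den K b E \<omega> (L - length y) y \<noteq> 0)"

lemma child_in_ball: "y \<in> tree_ball K L \<Longrightarrow> length y < L \<Longrightarrow> i < K \<Longrightarrow> i # y \<in> tree_ball K L"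
  by (auto simp: tree_ball_def)

lemma tl_in_ball: "y \<in> tree_ball K L \<Longrightarrow> tl y \<in> tree_ball K L"
  by (cases y) (auto simp: tree_ball_def)

lemma hom_step:
  assumes g: "good K L b E \<omega>"
    and eqs: "\<forall>y\<in>tree_ball K L. ham K L b \<omega> \<phi> y - E * \<phi> y = 0"
  shows "y \<in> tree_ball K L \<Longrightarrow> length y + n = L \<Longrightarrow>
     (if y = [] then 0 else \<phi> (tl y)) + den K b E \<omega> n y * \<phi> y = 0"
proof (induction n arbitrary: y)
  case 0
  then show ?case using eqs ham_eq[OF 0(1), of b \<omega> \<phi>]
    by (auto simp: den_def algebra_simps)
next
  case (Suc m)
  have ch: "\<phi> (i#y) = - gam K b E \<omega> m (i#y) * \<phi> y" if i: "i < K" for i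
  proof -
    have c: "i # y \<in> tree_ball K L" using child_in_ball[OF Suc(2) _ i] Suc(3) by simp
    have "length (i#y) + m = L" using Suc(3) by simp
    from Suc.IH[OF c this] have "\<phi> y + den K b E \<omega> m (i#y) * \<phi> (i#y) = 0" by simp
    moreover have "den K b E \<omega> m (i#y) \<noteq> 0" using g c \<open>length (i#y) + m = L\<close>
      unfolding good_def by (metis add_diff_cancel_left' add.commute)
    ultimately show ?thesis by (simp add: gam_den field_simps)
  qed
  have "(\<Sum>i<K. \<phi> (i#y)) = - (\<Sum>i<K. gam K b E \<omega> m (i#y)) * \<phi> y"
    by (simp add: ch sum_distrib_right sum_negf)
  then show ?case using eqs Suc(2,3) ham_eq[OF Suc(2), of b \<omega> \<phi>]
    by (auto simp: den_def algebra_simps)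
qed

lemma hom_zero:
  assumes g: "good K L b E \<omega>"
    and out: "\<forall>y. y \<notin> tree_ball K L \<longrightarrow> \<phi> y = 0"
    and eqs: "\<forall>y\<in>tree_ball K L. ham K L b \<omega> \<phi> y - E * \<phi> y = 0"
  shows "\<phi> y = 0"
proof (cases "y \<in> tree_ball K L")
  case False then show ?thesis using out by simp
next
  case True
  have D: "den K b E \<omega> (L - length z) z \<noteq> 0" if "z \<in> tree_ball K L" for z
    using g that by (simp add: good_def)
  have st: "(if z = [] then 0 else \<phi> (tl z)) + den K b E \<omega> (L - length z) z * \<phi> z = 0"
    if "z \<in> tree_ball K L" for z
    using hom_step[OF g eqs that] that by (auto simp: tree_ball_def)
  show ?thesis using True
  proof (induction y)
    case Nil
    then show ?case using st[OF Nil] D[OF Nil] by simp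
  next
    case (Cons i z)
    have z: "z \<in> tree_ball K L" using tl_in_ball[OF Cons(2)] by simp
    then show ?case using Cons.IH[OF z] st[OF Cons(2)] D[OF Cons(2)] by simp
  qed
qed

lemma ham_diff: "ham K L b \<omega> (\<lambda>y. f y - g y) y = ham K L b \<omega> f y - ham K L b \<omega> g y"
proof -
  have "(\<Sum>z\<in>tree_ball K L. if tree_adj y z then f z - g z else 0) =
    (\<Sum>z\<in>tree_ball K L. (if tree_adj y z then f z else 0) - (if tree_adj y z then g z else 0))"
    by (rule sum.cong) auto
  then show ?thesis unfolding ham_def by (simp add: sum_subtractf algebra_simps)
qed

fun pq :: "(nat \<Rightarrow> real) \<Rightarrow> (nat \<Rightarrow> real) \<Rightarrow> nat \<Rightarrow> real \<times> real" where
  "pq dj gj 0 = (0, 1)"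
| "pq dj gj (Suc j) = (snd (pq dj gj j), - fst (pq dj gj j) - (dj j + gj (Suc j)) * snd (pq dj gj j))"

lemma pq_q:
  assumes "\<And>i. i \<le> j \<Longrightarrow> gj i * dj i = 1"
  shows "fst (pq dj gj j) + snd (pq dj gj j) * dj j = (-1)^j * (\<Prod>i\<le>j. dj i)"
  using assms
proof (induction j)
  case 0 then show ?case by simp
next
  case (Suc j)
  have IH: "fst (pq dj gj j) + snd (pq dj gj j) * dj j = (-1)^j * (\<Prod>i\<le>j. dj i)"
    using Suc by simp
  have g: "gj (Suc j) * dj (Suc j) = 1" using Suc(2) by simp
  have "fst (pq dj gj (Suc j)) + snd (pq dj gj (Suc j)) * dj (Suc j)
      = - dj (Suc j) * (fst (pq dj gj j) + snd (pq dj gj j) * dj j)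
        + snd (pq dj gj j) * (1 - gj (Suc j) * dj (Suc j))"
    by (simp add: algebra_simps)
  also have "\<dots> = (-1)^(Suc j) * (\<Prod>i\<le>Suc j. dj i)"
    unfolding IH g by (simp add: algebra_simps)
  finally show ?case .
qed

fun psi :: "(nat list \<Rightarrow> bool) \<Rightarrow> (nat list \<Rightarrow> real) \<Rightarrow> (nat list \<Rightarrow> real) \<Rightarrow> nat list \<Rightarrow> real" where
  "psi onp pv gv [] = pv []"
| "psi onp pv gv (i#z) = (if onp (i#z) then pv (i#z) else - gv (i#z) * psi onp pv gv z)"

locale pathctx =
  fixes K L :: nat and b E :: real and \<omega> :: "nat list \<Rightarrow> real" and x :: "nat list"
  assumes xS: "x \<in> tree_ball K L" and g: "good K L b E \<omega>"
begin

abbreviation "S \<equiv> tree_ball K L"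
abbreviation "d \<equiv> length x"
definition "xs j = drop (d - j) x"
definition "dj j = den K b E \<omega> (L - j) (xs j)"
definition "gj j = gam K b E \<omega> (L - j) (xs j)"
definition "onp y \<longleftrightarrow> (\<exists>k. y = drop k x)"
definition "tt = 1 / ((-1)^d * (\<Prod>i\<le>d. dj i))"
definition "pv y = tt * snd (pq dj gj (length y))"
definition "gv y = gam K b E \<omega> (L - length y) y"
definition "\<psi> y = (if y \<in> S then psi onp pv gv y else 0)"

lemma dL: "d \<le> L" using xS by (simp add: tree_ball_def)

lemma len_xs: "j \<le> d \<Longrightarrow> length (xs j) = j" by (simp add: xs_def)

lemma xs_in: "j \<le> d \<Longrightarrow> xs j \<in> S"
  using xS by (auto simp: xs_def tree_ball_def dest: in_set_dropD)

lemma D: "y \<in> S \<Longrightarrow> den K b E \<omega> (L - length y) y \<noteq> 0"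
  using g by (simp add: good_def)

lemma gd: "y \<in> S \<Longrightarrow> gam K b E \<omega> (L - length y) y * den K b E \<omega> (L - length y) y = 1"
  using D by (simp add: gam_den)

lemma gjdj: "j \<le> d \<Longrightarrow> gj j * dj j = 1"
  using gd[OF xs_in, of j] len_xs[of j] by (simp add: gj_def dj_def)

lemma dj_nz: "j \<le> d \<Longrightarrow> dj j \<noteq> 0"
  using gjdj[of j] by auto

lemma onp_tl: "onp (i#z) \<Longrightarrow> onp z"
  unfolding onp_def by (metis drop_Suc list.sel(3) tl_drop)

lemma onp_nil: "onp []" unfolding onp_def by (rule exI[of _ d]) simp

lemma onp_xs: "onp y \<Longrightarrow> length y \<le> d \<and> y = xs (length y)"
  unfolding onp_def xs_def
  by (metis (no_types, lifting) diff_diff_cancel diff_le_self drop_all length_drop linorder_not_le order_less_imp_le)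

lemma xs_onp: "onp (xs j)" unfolding onp_def xs_def by blast

lemma psi_onp: "onp y \<Longrightarrow> psi onp pv gv y = pv y"
  by (cases y) auto

lemma psi_nonp: "\<not> onp (i#z) \<Longrightarrow> psi onp pv gv (i#z) = - gv (i#z) * psi onp pv gv z"
  by simp

lemma xs_Suc: "j < d \<Longrightarrow> xs (Suc j) = (x ! (d - Suc j)) # xs j"
  unfolding xs_def by (metis Cons_nth_drop_Suc Suc_diff_Suc diff_less le_less_trans zero_less_Suc less_imp_le_nat not_less_zero linorder_neqE_nat)

lemma child_onp: "j < d \<Longrightarrow> onp (i # xs j) \<longleftrightarrow> i = x ! (d - Suc j)"
proof
  assume j: "j < d" and o: "onp (i # xs j)"
  then have "i # xs j = xs (length (i # xs j))" using onp_xs by blast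
  then have "i # xs j = xs (Suc j)" using len_xs[of j] j by simp
  then show "i = x ! (d - Suc j)" using xs_Suc[OF j] by simp
next
  assume "j < d" "i = x ! (d - Suc j)"
  then show "onp (i # xs j)" using xs_Suc xs_onp by metis
qed

lemma xs_d: "xs d = x" by (simp add: xs_def)

lemma den_exp:
  assumes y: "y \<in> S"
  shows "(if length y < L then (\<Sum>i<K. - gv (i#y) * c) else 0) + (\<omega> y - E + (if length y = L then b else 0)) * c
     = den K b E \<omega> (L - length y) y * c"
proof (cases "length y < L")
  case True
  then obtain m where m: "L - length y = Suc m" by (metis Suc_diff_Suc)
  then have "L - length (i#y) = m" for i by simp
  then show ?thesis using True m by (simp add: den_def gv_def sum_distrib_right sum_distrib_left sum_negf algebra_simps)
next
  case False
  then have "length y = L" using y by (simp add: tree_ball_def)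
  then show ?thesis by (simp add: den_def)
qed

lemma eqn:
  assumes y: "y \<in> S"
  shows "ham K L b \<omega> \<psi> y - E * \<psi> y = (if y = x then 1 else 0)"
proof -
  have chS: "\<psi> (i#y) = psi onp pv gv (i#y)" if "length y < L" "i < K" for i
    using child_in_ball[OF y that] by (simp add: \<psi>_def)
  have yv: "\<psi> y = psi onp pv gv y" using y by (simp add: \<psi>_def)
  have H: "ham K L b \<omega> \<psi> y - E * \<psi> y =
     (if y = [] then 0 else psi onp pv gv (tl y)) + (if length y < L then (\<Sum>i<K. \<psi> (i#y)) else 0)
     + (\<omega> y - E + (if length y = L then b else 0)) * \<psi> y"
  proof -
    have "(if y = [] then 0 else \<psi> (tl y)) = (if y = [] then 0 else psi onp pv gv (tl y))"
      using tl_in_ball[OF y] by (simp add: \<psi>_def)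
    then show ?thesis unfolding ham_eq[OF y] by (simp add: algebra_simps)
  qed
  show ?thesis
  proof (cases "onp y")
    case False
    then obtain i z where yz: "y = i # z" using onp_nil by (cases y) auto
    have nc: "\<not> onp (j#y)" for j using False onp_tl by blast
    have ch: "(if length y < L then (\<Sum>i<K. \<psi> (i#y)) else 0) = (if length y < L then (\<Sum>i<K. - gv (i#y) * \<psi> y) else 0)"
      using chS nc yv by auto
    have "ham K L b \<omega> \<psi> y - E * \<psi> y = psi onp pv gv z + den K b E \<omega> (L - length y) y * \<psi> y"
      unfolding H ch using den_exp[OF y, of "\<psi> y"] yz by simp
    also have "\<dots> = 0" using yv yz False gd[OF y] by (simp add: gv_def algebra_simps)
    moreover have "onp x" using xs_onp[of d] xs_d by simp
    ultimately show ?thesis using False by auto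
  next
    case True
    define j where "j = length y"
    have jy: "length y = j" by (simp add: j_def)
    have jd: "j \<le> d" and yj: "y = xs j" using onp_xs[OF True] by (auto simp: jy)
    have yv': "\<psi> y = tt * snd (pq dj gj j)" using yv psi_onp[OF True] by (simp add: pv_def jy)
    have par: "(if y = [] then 0 else psi onp pv gv (tl y)) = tt * fst (pq dj gj j)"
    proof (cases j)
      case 0 then show ?thesis using jy by simp
    next
      case (Suc i)
      then obtain a z where yz: "y = a # z" using jy by (cases y) auto
      have "onp z" using True yz onp_tl by blast
      then show ?thesis using yz Suc jy psi_onp by (simp add: pv_def)
    qed
    show ?thesis
    proof (cases "j = d")
      case True
      then have yx: "y = x" using yj xs_d by simp
      have nc: "\<not> onp (i#y)" for i using onp_xs[of "i#y"] yx by auto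
      have ch: "(if length y < L then (\<Sum>i<K. \<psi> (i#y)) else 0) = (if length y < L then (\<Sum>i<K. - gv (i#y) * \<psi> y) else 0)"
        using chS nc yv by auto
      have "ham K L b \<omega> \<psi> y - E * \<psi> y = tt * fst (pq dj gj j) + dj j * (tt * snd (pq dj gj j))"
        unfolding H ch par using den_exp[OF y, of "\<psi> y"] yv' yj jy by (simp add: dj_def)
      also have "\<dots> = tt * (fst (pq dj gj j) + snd (pq dj gj j) * dj j)" by (simp add: algebra_simps)
      also have "\<dots> = tt * ((-1)^d * (\<Prod>i\<le>d. dj i))"
        using pq_q[of d gj dj, OF gjdj] True by simp
      also have "\<dots> = 1" unfolding tt_def using dj_nz by (simp add: power_0_left)
      finally show ?thesis using yx by simp
    next
      case False
      then have jd': "j < d" using jd by simp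
      then have jL: "length y < L" using dL jy by simp
      define i0 where "i0 = x ! (d - Suc j)"
      have "x ! (d - Suc j) \<in> set x" using jd' by (intro nth_mem) simp
      then have i0K: "i0 < K" using xS by (auto simp: i0_def tree_ball_def)
      have c0: "i0 # y = xs (Suc j)" using xs_Suc[OF jd'] yj i0_def by simp
      have trm: "\<psi> (i#y) = - gv (i#y) * \<psi> y + (if i = i0 then tt * snd (pq dj gj (Suc j)) + gj (Suc j) * (tt * snd (pq dj gj j)) else 0)"
        if "i < K" for i
      proof (cases "i = i0")
        case True
        have "onp (i#y)" using True c0 xs_onp by simp
        then have "\<psi> (i#y) = tt * snd (pq dj gj (Suc j))"
          using chS[OF jL that] psi_onp jy by (simp add: pv_def del: pq.simps)
        moreover have "gv (i#y) = gj (Suc j)" using True c0 len_xs[of "Suc j"] jd' by (simp add: gv_def gj_def)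
        ultimately show ?thesis using True yv' by (simp add: algebra_simps del: pq.simps)
      next
        case False
        then have "\<not> onp (i#y)" using child_onp[OF jd'] yj i0_def by simp
        then show ?thesis using False chS[OF jL that] yv by simp
      qed
      define Cc where "Cc = tt * snd (pq dj gj (Suc j)) + gj (Suc j) * (tt * snd (pq dj gj j))"
      have "(\<Sum>i<K. \<psi> (i#y)) = (\<Sum>i<K. - gv (i#y) * \<psi> y + (if i = i0 then Cc else 0))"
        by (rule sum.cong) (simp_all add: trm Cc_def del: pq.simps)
      also have "\<dots> = (\<Sum>i<K. - gv (i#y) * \<psi> y) + Cc"
        using i0K by (simp only: sum.distrib) simp
      finally have "(\<Sum>i<K. \<psi> (i#y)) = (\<Sum>i<K. - gv (i#y) * \<psi> y) + (tt * snd (pq dj gj (Suc j)) + gj (Suc j) * (tt * snd (pq dj gj j)))"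
        unfolding Cc_def .
      then have "ham K L b \<omega> \<psi> y - E * \<psi> y = tt * fst (pq dj gj j) + tt * snd (pq dj gj (Suc j)) + gj (Suc j) * (tt * snd (pq dj gj j)) + dj j * (tt * snd (pq dj gj j))"
        unfolding H par using den_exp[OF y, of "\<psi> y"] yv' yj jy jL by (simp add: dj_def algebra_simps)
      also have "\<dots> = 0" by (simp add: algebra_simps)
      moreover have "y \<noteq> x" using False jy by auto
      ultimately show ?thesis by simp
    qed
  qed
qed

lemma green_formula: "green K L b \<omega> E x = tt"
proof -
  let ?P = "\<lambda>\<phi>. (\<forall>y. y \<notin> S \<longrightarrow> \<phi> y = 0) \<and> (\<forall>y\<in>S. ham K L b \<omega> \<phi> y - E * \<phi> y = (if y = x then 1 else 0))"
  have P: "?P \<psi>" using eqn by (simp add: \<psi>_def)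
  have U: "\<phi> = \<psi>" if "?P \<phi>" for \<phi>
  proof
    fix y
    have "(\<lambda>y. \<phi> y - \<psi> y) y = 0"
    proof (rule hom_zero[OF g])
      show "\<forall>y. y \<notin> S \<longrightarrow> \<phi> y - \<psi> y = 0" using that P by simp
      show "\<forall>y\<in>S. ham K L b \<omega> (\<lambda>y. \<phi> y - \<psi> y) y - E * (\<phi> y - \<psi> y) = 0"
      proof
        fix y assume "y \<in> S"
        then have "ham K L b \<omega> \<phi> y - E * \<phi> y = ham K L b \<omega> \<psi> y - E * \<psi> y" using that P by simp
        then show "ham K L b \<omega> (\<lambda>y. \<phi> y - \<psi> y) y - E * (\<phi> y - \<psi> y) = 0"
          by (simp add: ham_diff algebra_simps)
      qed
    qed
    then show "\<phi> y = \<psi> y" by simp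
  qed
  have "(THE \<phi>. ?P \<phi>) = \<psi>" using P U by (rule the_equality)
  then have "green K L b \<omega> E x = \<psi> []" unfolding green_def by simp
  also have "\<dots> = tt" using onp_nil psi_onp by (simp add: \<psi>_def pv_def tree_ball_def)
  finally show ?thesis .
qed

end


lemma coord_bound:
  fixes N :: "real measure" and f g :: "(nat list \<Rightarrow> real) \<Rightarrow> ennreal"
  assumes P: "prob_space N" and S: "finite S" "i \<in> S"
    and f[measurable]: "f \<in> borel_measurable (PiM S (\<lambda>_. N))"
    and gm[measurable]: "g \<in> borel_measurable (PiM S (\<lambda>_. N))"
    and gi: "\<And>x w. g (x(i:=w)) = g x"
    and fb: "\<And>x. x \<in> space (PiM S (\<lambda>_. N)) \<Longrightarrow> (\<integral>\<^sup>+w. f (x(i:=w)) \<partial>N) \<le> C"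
  shows "(\<integral>\<^sup>+x. f x * g x \<partial>PiM S (\<lambda>_. N)) \<le> C * (\<integral>\<^sup>+x. g x \<partial>PiM S (\<lambda>_. N))"
proof -
  interpret prob_space N by (rule P)
  interpret product_sigma_finite "\<lambda>_. N" by standard
  obtain w0 where w0: "w0 \<in> space N" using not_empty by blast
  have SI: "S = insert i (S - {i})" using S by auto
  have fg[measurable]: "(\<lambda>x. f x * g x) \<in> borel_measurable (PiM (insert i (S - {i})) (\<lambda>_. N))"
    using SI[symmetric] by simp
  have gm'[measurable]: "g \<in> borel_measurable (PiM (insert i (S - {i})) (\<lambda>_. N))"
    using SI[symmetric] by simp
  have PI: "PiM (insert i (S - {i})) (\<lambda>_. N) = PiM S (\<lambda>_. N)" using S by (simp add: insert_absorb)
  have "(\<integral>\<^sup>+x. f x * g x \<partial>PiM S (\<lambda>_. N)) =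
      (\<integral>\<^sup>+z. (\<integral>\<^sup>+y. f (z(i:=y)) * g (z(i:=y)) \<partial>N) \<partial>PiM (S - {i}) (\<lambda>_. N))"
    unfolding PI[symmetric] by (rule product_nn_integral_insert) (use S fg in auto)
  also have "\<dots> = (\<integral>\<^sup>+z. (\<integral>\<^sup>+y. f (z(i:=y)) \<partial>N) * g z \<partial>PiM (S - {i}) (\<lambda>_. N))"
  proof (rule nn_integral_cong)
    fix z assume z: "z \<in> space (PiM (S - {i}) (\<lambda>_. N))"
    have f'[measurable]: "f \<in> borel_measurable (PiM (insert i (S - {i})) (\<lambda>_. N))" using PI by simp
    have "(\<lambda>y. f (z(i:=y))) \<in> borel_measurable N"
      using measurable_comp[OF measurable_component_update[OF z, of i] f'] by (simp add: comp_def)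
    then show "(\<integral>\<^sup>+y. f (z(i:=y)) * g (z(i:=y)) \<partial>N) = (\<integral>\<^sup>+y. f (z(i:=y)) \<partial>N) * g z"
      by (simp add: gi nn_integral_multc)
  qed
  also have "\<dots> \<le> (\<integral>\<^sup>+z. C * g z \<partial>PiM (S - {i}) (\<lambda>_. N))"
  proof (rule nn_integral_mono)
    fix z assume z: "z \<in> space (PiM (S - {i}) (\<lambda>_. N))"
    have "z(i:=w0) \<in> space (PiM S (\<lambda>_. N))"
      using z w0 S by (auto simp: space_PiM PiE_iff extensional_def)
    from fb[OF this] have "(\<integral>\<^sup>+y. f (z(i:=y)) \<partial>N) \<le> C" by simp
    then show "(\<integral>\<^sup>+y. f (z(i:=y)) \<partial>N) * g z \<le> C * g z" by (rule mult_right_mono) simp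
  qed
  also have "\<dots> = (\<integral>\<^sup>+z. (\<integral>\<^sup>+y. C * g (z(i:=y)) \<partial>N) \<partial>PiM (S - {i}) (\<lambda>_. N))"
    by (simp add: gi emeasure_space_1)
  also have "\<dots> = (\<integral>\<^sup>+x. C * g x \<partial>PiM S (\<lambda>_. N))"
    unfolding PI[symmetric] by (rule product_nn_integral_insert[symmetric]) (use S gm' in auto)
  also have "\<dots> = C * (\<integral>\<^sup>+x. g x \<partial>PiM S (\<lambda>_. N))"
    by (rule nn_integral_cmult) simp
  finally show ?thesis .
qed


lemma powr_small_s:
  fixes v s :: real
  assumes s: "0 \<le> s" "s \<le> 1/4"
  shows "\<bar>v\<bar> powr s \<le> 1 + 2 * s * \<bar>v\<bar> powr (1/2)"
proof (cases "\<bar>v\<bar> \<le> 1")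
  case True
  then have "\<bar>v\<bar> powr s \<le> 1"
    using powr_mono2[of s "\<bar>v\<bar>" 1] s by simp
  moreover have "0 \<le> 2 * s * \<bar>v\<bar> powr (1/2)" using s by simp
  ultimately show ?thesis by linarith
next
  case False
  define l where "l = ln \<bar>v\<bar>"
  have l0: "0 < l" using False by (simp add: l_def)
  have vl: "\<bar>v\<bar> powr r = exp (r * l)" for r using False by (simp add: powr_def l_def)
  have e1: "exp (s * l) - 1 \<le> s * l * exp (s * l)"
  proof -
    have "1 - s * l \<le> exp (- (s * l))" using exp_ge_add_one_self[of "- (s*l)"] by simp
    then have "(1 - s * l) * exp (s * l) \<le> exp (- (s * l)) * exp (s * l)" by (rule mult_right_mono) simp
    then show ?thesis by (simp add: exp_minus field_simps)
  qed
  have e2: "exp (s * l) \<le> exp (l / 4)" using s l0 by (simp add: mult_right_mono)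
  have e3: "l \<le> 2 * exp (l / 4)"
  proof -
    have "l / 4 \<le> exp (l/4 - 1)" using exp_ge_add_one_self[of "l/4 - 1"] by simp
    also have "\<dots> = exp (l/4) / exp 1" by (simp add: exp_diff)
    also have "\<dots> \<le> exp (l/4) / 2" using exp_ge_add_one_self[of 1]
      by (intro divide_left_mono) auto
    finally show ?thesis by simp
  qed
  have "s * l * exp (s * l) \<le> s * (2 * exp (l/4)) * exp (l/4)"
    using e2 e3 s l0 by (intro mult_mono) auto
  also have "\<dots> = 2 * s * exp ((1/2) * l)" by (simp add: exp_add[symmetric])
  finally show ?thesis using e1 by (simp add: vl)
qed

lemma ln_sqrt_bound:
  fixes v :: real
  shows "ln (1 + \<bar>v\<bar>) \<le> 2 * \<bar>v\<bar> powr (1/2)"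
proof -
  define r where "r = \<bar>v\<bar> powr (1/2)"
  have r0: "0 \<le> r" by (simp add: r_def)
  have rr: "r * r = \<bar>v\<bar>" unfolding r_def by (simp add: powr_add[symmetric])
  have "1 + \<bar>v\<bar> \<le> (1 + r) * (1 + r)" using rr r0 by (simp add: algebra_simps)
  then have "ln (1 + \<bar>v\<bar>) \<le> ln ((1 + r) * (1 + r))" by (simp add: r0)
  also have "\<dots> = 2 * ln (1 + r)" using r0 by (simp add: ln_mult)
  also have "\<dots> \<le> 2 * r" using ln_add_one_self_le_self[OF r0] by simp
  finally show ?thesis by (simp add: r_def)
qed

lemma ln_tau_bound:
  fixes t \<tau> :: real
  assumes "0 < \<tau>"
  shows "ln (1 + \<bar>t\<bar>) \<le> 1 + \<bar>t\<bar> powr \<tau> / \<tau>"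
proof (cases "\<bar>t\<bar> \<le> 1")
  case True
  then have "ln (1 + \<bar>t\<bar>) \<le> ln 2" by simp
  also have "\<dots> \<le> 1" using ln_2_less_1 by simp
  finally show ?thesis using assms by (smt (verit) divide_nonneg_pos powr_ge_zero)
next
  case False
  have "ln (1 + \<bar>t\<bar>) \<le> ln (2 * \<bar>t\<bar>)" using False by simp
  also have "\<dots> = ln 2 + ln \<bar>t\<bar>" using False by (simp add: ln_mult)
  also have "ln \<bar>t\<bar> = ln (\<bar>t\<bar> powr \<tau>) / \<tau>" using False assms by (simp add: ln_powr)
  also have "ln (\<bar>t\<bar> powr \<tau>) \<le> \<bar>t\<bar> powr \<tau>" using False by (intro ln_le_minus_one[THEN order_trans]) auto
  finally show ?thesis using ln_2_less_1 assms by (smt (verit) divide_right_mono)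
qed

lemma integral_h1: "(\<integral>\<^sup>+u. ennreal (u powr (-1/2)) * indicator {0..1} u \<partial>lborel) = ennreal 2"
proof -
  have "((\<lambda>u. u powr (-1/2)) has_integral (1 powr (-1/2 + 1) / (-1/2 + 1))) {0..1::real}"
    by (rule has_integral_powr_from_0) auto
  then have "((\<lambda>u. u powr (-1/2)) has_integral 2) {0..1::real}" by simp
  from nn_integral_has_integral_lebesgue'[OF _ this] show ?thesis by simp
qed

lemma integral_h: "(\<integral>\<^sup>+u. ennreal (indicator {-1..1} u * \<bar>1/u\<bar> powr (1/2)) \<partial>lborel) \<le> 4"
proof -
  define h1 where "h1 u = ennreal (u powr (-1/2)) * indicator {0..1} u" for u :: real
  have m1[measurable]: "h1 \<in> borel_measurable borel" unfolding h1_def by measurable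
  have pt: "ennreal (indicator {-1..1} u * \<bar>1/u\<bar> powr (1/2)) \<le> h1 u + h1 (-u)" for u :: real
  proof (cases "u = 0")
    case True then show ?thesis by simp
  next
    case False
    show ?thesis
    proof (cases "0 < u")
      case True
      have "\<bar>1/u\<bar> powr (1/2) = u powr (-1/2)" using True by (simp add: powr_minus_divide powr_divide)
      then show ?thesis using True by (auto simp: h1_def indicator_def)
    next
      case False
      then have "u < 0" using \<open>u \<noteq> 0\<close> by simp
      then have a: "\<bar>1/u\<bar> = 1/(-u)" by simp
      have "(1/(-u)) powr (1/2) = 1 / (-u) powr (1/2)" using \<open>u < 0\<close> powr_divide[of 1 "-u" "1/2"] by simp
      also have "\<dots> = (-u) powr (-1/2)" by (simp add: powr_minus_divide)
      finally have "\<bar>1/u\<bar> powr (1/2) = (-u) powr (-1/2)" using a by simp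
      then show ?thesis using \<open>u < 0\<close> by (auto simp: h1_def indicator_def)
    qed
  qed
  have "(\<integral>\<^sup>+u. ennreal (indicator {-1..1} u * \<bar>1/u\<bar> powr (1/2)) \<partial>lborel) \<le> (\<integral>\<^sup>+u. h1 u + h1 (-u) \<partial>lborel)"
    by (rule nn_integral_mono) (rule pt)
  also have "\<dots> = (\<integral>\<^sup>+u. h1 u \<partial>lborel) + (\<integral>\<^sup>+u. h1 (-u) \<partial>lborel)"
    by (rule nn_integral_add) auto
  also have "(\<integral>\<^sup>+u. h1 (-u) \<partial>lborel) = (\<integral>\<^sup>+u. h1 u \<partial>lborel)"
    using nn_integral_real_affine[OF m1, of "-1" 0] by simp
  also have "(\<integral>\<^sup>+u. h1 u \<partial>lborel) = 2" using integral_h1 unfolding h1_def by simp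
  finally show ?thesis by simp
qed


locale site =
  fixes \<rho> :: "real \<Rightarrow> real"
  assumes A1: "assumption_A1 \<rho>"
begin

definition "N = density lborel (\<lambda>t. ennreal (\<rho> t))"
definition "Mr = (SOME C. 0 \<le> C \<and> (\<forall>t. \<rho> t \<le> C))"
definition "tau = (SOME \<tau>. 0 < \<tau> \<and> integrable lborel (\<lambda>t. \<bar>t\<bar> powr \<tau> * \<rho> t))"
definition "Tm = (\<integral>t. \<bar>t\<bar> powr tau * \<rho> t \<partial>lborel)"

lemma rho_meas[measurable]: "\<rho> \<in> borel_measurable borel" using A1 by (simp add: assumption_A1_def)
lemma rho_nn: "0 \<le> \<rho> t" using A1 by (simp add: assumption_A1_def)
lemma rho_int: "(\<integral>\<^sup>+ t. ennreal (\<rho> t) \<partial>lborel) = 1" using A1 by (simp add: assumption_A1_def)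

lemma Mr: "0 \<le> Mr" "\<rho> t \<le> Mr"
proof -
  obtain C where "\<forall>t. \<rho> t \<le> C" using A1 by (auto simp: assumption_A1_def)
  then have "\<exists>C. 0 \<le> C \<and> (\<forall>t. \<rho> t \<le> C)" by (intro exI[of _ "max 0 C"]) (auto intro: max.coboundedI2)
  from someI_ex[OF this] show "0 \<le> Mr" "\<rho> t \<le> Mr" unfolding Mr_def by auto
qed

lemma tau: "0 < tau" "integrable lborel (\<lambda>t. \<bar>t\<bar> powr tau * \<rho> t)"
proof -
  have "\<exists>\<tau>. 0 < \<tau> \<and> integrable lborel (\<lambda>t. \<bar>t\<bar> powr \<tau> * \<rho> t)" using A1 by (auto simp: assumption_A1_def)
  from someI_ex[OF this] show "0 < tau" "integrable lborel (\<lambda>t. \<bar>t\<bar> powr tau * \<rho> t)" unfolding tau_def by auto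
qed

lemma prob_N: "prob_space N"
  by (rule prob_spaceI) (simp add: N_def emeasure_density_const rho_int emeasure_density)

lemma space_N[simp]: "space N = UNIV" by (simp add: N_def)
lemma sets_N[simp]: "sets N = sets borel" by (simp add: N_def)

lemma nnN: "f \<in> borel_measurable borel \<Longrightarrow> (\<integral>\<^sup>+w. f w \<partial>N) = (\<integral>\<^sup>+w. ennreal (\<rho> w) * f w \<partial>lborel)"
  unfolding N_def by (subst nn_integral_density) auto

lemma half_bound: "(\<integral>\<^sup>+w. ennreal (\<bar>1/(w-a)\<bar> powr (1/2)) \<partial>N) \<le> ennreal (1 + 4 * Mr)"
proof -
  define h where "h u = ennreal (indicator {-1..1} u * \<bar>1/u\<bar> powr (1/2))" for u :: real
  have hm[measurable]: "h \<in> borel_measurable borel" unfolding h_def by measurable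
  have pt: "ennreal (\<rho> w) * ennreal (\<bar>1/(w-a)\<bar> powr (1/2)) \<le> ennreal (\<rho> w) + ennreal Mr * h (w - a)" for w
  proof (cases "\<bar>w - a\<bar> \<le> 1")
    case True
    have "ennreal (\<rho> w) * ennreal (\<bar>1/(w-a)\<bar> powr (1/2)) \<le> ennreal Mr * h (w - a)"
      using True Mr rho_nn by (auto simp: h_def indicator_def ennreal_mult[symmetric] intro!: ennreal_leI mult_right_mono)
    then show ?thesis by (simp add: add_increasing)
  next
    case False
    then have "\<bar>1/(w-a)\<bar> \<le> 1" by (simp add: abs_div)
    then have "\<bar>1/(w-a)\<bar> powr (1/2) \<le> 1" using powr_mono2[of "1/2" "\<bar>1/(w-a)\<bar>" 1] by simp
    then have "ennreal (\<rho> w) * ennreal (\<bar>1/(w-a)\<bar> powr (1/2)) \<le> ennreal (\<rho> w)"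
      using rho_nn by (simp add: ennreal_mult[symmetric] ennreal_leI mult_left_le)
    then show ?thesis by (simp add: add_increasing2)
  qed
  have "(\<integral>\<^sup>+w. ennreal (\<bar>1/(w-a)\<bar> powr (1/2)) \<partial>N) = (\<integral>\<^sup>+w. ennreal (\<rho> w) * ennreal (\<bar>1/(w-a)\<bar> powr (1/2)) \<partial>lborel)"
    by (rule nnN) measurable
  also have "\<dots> \<le> (\<integral>\<^sup>+w. ennreal (\<rho> w) + ennreal Mr * h (w - a) \<partial>lborel)"
    by (rule nn_integral_mono) (rule pt)
  also have "\<dots> = (\<integral>\<^sup>+w. ennreal (\<rho> w) \<partial>lborel) + ennreal Mr * (\<integral>\<^sup>+w. h (w - a) \<partial>lborel)"
    by (subst nn_integral_add) (auto simp: nn_integral_cmult)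
  also have "(\<integral>\<^sup>+w. h (w - a) \<partial>lborel) = (\<integral>\<^sup>+w. h w \<partial>lborel)"
    using nn_integral_real_affine[OF hm, of 1 "-a"] by simp
  also have "(\<integral>\<^sup>+w. h w \<partial>lborel) \<le> 4" unfolding h_def by (rule integral_h)
  finally have "(\<integral>\<^sup>+w. ennreal (\<bar>1/(w-a)\<bar> powr (1/2)) \<partial>N) \<le> 1 + ennreal Mr * 4"
    using rho_int by (smt (verit) add_left_mono mult_left_mono zero_le order_trans)
  also have "\<dots> = ennreal (1 + 4 * Mr)" using Mr by (simp add: ennreal_mult ennreal_plus[symmetric] mult.commute)
  finally show ?thesis .
qed

lemma nn_add_cmult:
  assumes [measurable]: "f \<in> borel_measurable borel"
  shows "(\<integral>\<^sup>+w. 1 + c * f w \<partial>N) = 1 + c * (\<integral>\<^sup>+w. f w \<partial>N)"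
proof -
  interpret prob_space N by (rule prob_N)
  have fm: "f \<in> borel_measurable N" by (subst measurable_cong_sets[OF sets_N refl]) (rule assms)
  have "(\<integral>\<^sup>+w. 1 + c * f w \<partial>N) = (\<integral>\<^sup>+w. 1 \<partial>N) + (\<integral>\<^sup>+w. c * f w \<partial>N)"
    by (rule nn_integral_add) (use fm in auto)
  also have "(\<integral>\<^sup>+w. c * f w \<partial>N) = c * (\<integral>\<^sup>+w. f w \<partial>N)" by (rule nn_integral_cmult) (use fm in auto)
  also have "(\<integral>\<^sup>+w. 1 \<partial>N) = 1" using emeasure_space_1 by simp
  finally show ?thesis .
qed

lemma s_bound:
  assumes s: "0 \<le> s" "s \<le> 1/4"
  shows "(\<integral>\<^sup>+w. ennreal (\<bar>1/(w-a)\<bar> powr s) \<partial>N) \<le> ennreal (1 + 2 * s * (1 + 4 * Mr))"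
proof -
  interpret prob_space N by (rule prob_N)
  have "(\<integral>\<^sup>+w. ennreal (\<bar>1/(w-a)\<bar> powr s) \<partial>N) \<le> (\<integral>\<^sup>+w. 1 + ennreal (2 * s) * ennreal (\<bar>1/(w-a)\<bar> powr (1/2)) \<partial>N)"
  proof (rule nn_integral_mono)
    fix w
    have "ennreal (\<bar>1/(w-a)\<bar> powr s) \<le> ennreal (1 + 2 * s * \<bar>1/(w-a)\<bar> powr (1/2))"
      by (rule ennreal_leI) (rule powr_small_s[OF s])
    also have "\<dots> = 1 + ennreal (2 * s) * ennreal (\<bar>1/(w-a)\<bar> powr (1/2))"
      using s by (subst ennreal_plus) (auto simp: ennreal_mult)
    finally show "ennreal (\<bar>1/(w-a)\<bar> powr s) \<le> 1 + ennreal (2 * s) * ennreal (\<bar>1/(w-a)\<bar> powr (1/2))" .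
  qed
  also have "\<dots> = 1 + ennreal (2 * s) * (\<integral>\<^sup>+w. ennreal (\<bar>1/(w-a)\<bar> powr (1/2)) \<partial>N)"
    by (rule nn_add_cmult) measurable
  also have "\<dots> \<le> 1 + ennreal (2 * s) * ennreal (1 + 4 * Mr)"
    by (intro add_left_mono mult_left_mono half_bound) auto
  also have "\<dots> = ennreal (1 + 2 * s * (1 + 4 * Mr))"
    using s Mr by (subst ennreal_plus[of 1 "2 * s * (1 + 4 * Mr)"]) (auto simp: ennreal_mult)
  finally show ?thesis .
qed

lemma ln_bound: "(\<integral>\<^sup>+w. ennreal (ln (1 + \<bar>w\<bar>)) \<partial>N) \<le> ennreal (1 + Tm / tau)"
proof -
  interpret prob_space N by (rule prob_N)
  have "(\<integral>\<^sup>+w. ennreal (ln (1 + \<bar>w\<bar>)) \<partial>N) \<le> (\<integral>\<^sup>+w. 1 + ennreal (1/tau) * ennreal (\<bar>w\<bar> powr tau) \<partial>N)"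
  proof (rule nn_integral_mono)
    fix w
    have "ennreal (ln (1 + \<bar>w\<bar>)) \<le> ennreal (1 + 1/tau * \<bar>w\<bar> powr tau)"
      by (rule ennreal_leI) (use ln_tau_bound[OF tau(1), of w] in simp)
    also have "\<dots> = 1 + ennreal (1/tau) * ennreal (\<bar>w\<bar> powr tau)"
      using tau(1) by (subst ennreal_plus) (auto simp: ennreal_mult[symmetric])
    finally show "ennreal (ln (1 + \<bar>w\<bar>)) \<le> 1 + ennreal (1/tau) * ennreal (\<bar>w\<bar> powr tau)" .
  qed
  also have "\<dots> = 1 + ennreal (1/tau) * (\<integral>\<^sup>+w. ennreal (\<bar>w\<bar> powr tau) \<partial>N)"
    by (rule nn_add_cmult) measurable
  also have "(\<integral>\<^sup>+w. ennreal (\<bar>w\<bar> powr tau) \<partial>N) = (\<integral>\<^sup>+w. ennreal (\<bar>w\<bar> powr tau * \<rho> w) \<partial>lborel)"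
    by (subst nnN) (simp_all add: ennreal_mult rho_nn mult.commute)
  also have "\<dots> = ennreal Tm" unfolding Tm_def
    by (rule nn_integral_eq_integral) (use tau(2) rho_nn in auto)
  also have "1 + ennreal (1/tau) * ennreal Tm = ennreal (1 + Tm / tau)"
  proof -
    have "0 \<le> Tm" unfolding Tm_def by (rule integral_nonneg_AE) (use rho_nn in auto)
    then show ?thesis using tau(1) by (subst ennreal_plus[of 1 "Tm / tau"]) (auto simp: ennreal_mult[symmetric])
  qed
  finally show ?thesis .
qed

lemma point_null: "(\<integral>\<^sup>+w. indicator {a} w \<partial>N) = 0"
proof -
  have "(\<integral>\<^sup>+w. indicator {a} w \<partial>N) = (\<integral>\<^sup>+w. ennreal (\<rho> w) * indicator {a} w \<partial>lborel)"
    by (rule nnN) simp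
  also have "\<dots> = 0"
  proof (subst nn_integral_0_iff_AE)
    show "(\<lambda>w. ennreal (\<rho> w) * indicator {a} w) \<in> borel_measurable lborel" by measurable
    show "AE w in lborel. ennreal (\<rho> w) * indicator {a} w = 0"
      using AE_lborel_singleton[of a] by eventually_elim auto
  qed
  finally show ?thesis .
qed

end

lemma gam_local:
  "(\<And>p. \<omega> (p @ y) = \<omega>' (p @ y)) \<Longrightarrow> gam K b E \<omega> n y = gam K b E \<omega>' n y"
proof (induction n arbitrary: y)
  case 0
  then show ?case using 0[of "[]"] by simp
next
  case (Suc n)
  have "gam K b E \<omega> n (i#y) = gam K b E \<omega>' n (i#y)" for i
    by (rule Suc.IH) (metis Suc.prems append.assoc append_Cons append_Nil)
  then show ?case using Suc.prems[of "[]"] by simp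
qed

lemma gam_upd_short:
  assumes "length z < length y"
  shows "gam K b E (\<omega> (z:=w)) n y = gam K b E \<omega> n y"
  by (rule gam_local) (use assms in auto)

definition cst :: "nat \<Rightarrow> real \<Rightarrow> real \<Rightarrow> (nat list \<Rightarrow> real) \<Rightarrow> nat \<Rightarrow> nat list \<Rightarrow> real" where
  "cst K b E \<omega> n y = (case n of 0 \<Rightarrow> E - b | Suc m \<Rightarrow> E + (\<Sum>i<K. gam K b E \<omega> m (i#y)))"

lemma den_cst: "den K b E \<omega> n y = \<omega> y - cst K b E \<omega> n y"
  by (cases n) (auto simp: den_def cst_def)

lemma cst_upd: "cst K b E (\<omega> (y:=w)) n y = cst K b E \<omega> n y"
  by (cases n) (auto simp: cst_def gam_upd_short)

lemma gam_upd_self: "gam K b E (\<omega> (y:=w)) n y = 1 / (w - cst K b E \<omega> n y)"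
  by (simp add: gam_den den_cst cst_upd)

lemma den_upd_self: "den K b E (\<omega> (y:=w)) n y = w - cst K b E \<omega> n y"
  by (simp add: den_cst cst_upd)

context site
begin

abbreviation "MM K L \<equiv> PiM (tree_ball K L) (\<lambda>_. N)"

lemma MM_pot: "pot_measure \<rho> K L = MM K L" by (simp add: pot_measure_def N_def)

lemma prob_MM: "prob_space (MM K L)"
  by (rule prob_space_PiM) (use prob_N in auto)

lemma comp_meas[measurable]: "y \<in> tree_ball K L \<Longrightarrow> (\<lambda>\<omega>. \<omega> y) \<in> borel_measurable (MM K L)"
  using measurable_component_singleton[of y "tree_ball K L" "\<lambda>_. N"]
  by (simp add: measurable_cong_sets[OF refl sets_N])

lemma gam_meas:
  "y \<in> tree_ball K L \<Longrightarrow> length y + n = L \<Longrightarrow> (\<lambda>\<omega>. gam K b E \<omega> n y) \<in> borel_measurable (MM K L)"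
proof (induction n arbitrary: y)
  case 0
  then show ?case using comp_meas[OF 0(1)] by simp
next
  case (Suc n)
  have c: "(\<lambda>\<omega>. gam K b E \<omega> n (i#y)) \<in> borel_measurable (MM K L)" if "i < K" for i
    by (rule Suc.IH) (use Suc.prems that in \<open>auto simp: tree_ball_def\<close>)
  have "(\<lambda>\<omega>. \<Sum>i<K. gam K b E \<omega> n (i#y)) \<in> borel_measurable (MM K L)"
    using c by (intro borel_measurable_sum) auto
  then show ?case using comp_meas[OF Suc.prems(1)] by simp
qed

lemma den_meas:
  "(\<lambda>\<omega>. den K b E \<omega> n y) \<in> borel_measurable (MM K L)"
  if "y \<in> tree_ball K L" "length y + n = L"
proof (cases n)
  case 0
  then show ?thesis using comp_meas[of y K L] that by (simp add: den_def)
next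
  case (Suc m)
  have c: "(\<lambda>\<omega>. gam K b E \<omega> m (i#y)) \<in> borel_measurable (MM K L)" if "i < K" for i
    by (rule gam_meas) (use that Suc \<open>y \<in> tree_ball K L\<close> \<open>length y + n = L\<close> in \<open>auto simp: tree_ball_def\<close>)
  have "(\<lambda>\<omega>. \<Sum>i<K. gam K b E \<omega> m (i#y)) \<in> borel_measurable (MM K L)"
    using c by (intro borel_measurable_sum) auto
  then show ?thesis using comp_meas[of y K L] that Suc by (simp add: den_def)
qed

lemma coord1:
  assumes "y \<in> tree_ball K L" and [measurable]: "f \<in> borel_measurable (MM K L)"
    and "\<And>\<omega>. \<omega> \<in> space (MM K L) \<Longrightarrow> (\<integral>\<^sup>+w. f (\<omega> (y:=w)) \<partial>N) \<le> C"
  shows "(\<integral>\<^sup>+\<omega>. f \<omega> \<partial>MM K L) \<le> C"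
proof -
  interpret P: prob_space "MM K L" by (rule prob_MM)
  have "(\<integral>\<^sup>+\<omega>. f \<omega> * 1 \<partial>MM K L) \<le> C * (\<integral>\<^sup>+\<omega>. 1 \<partial>MM K L)"
    by (rule coord_bound[OF prob_N finite_tree_ball assms(1,2)]) (use assms in auto)
  then show ?thesis using P.emeasure_space_1 by simp
qed

lemma AE_den:
  assumes y: "y \<in> tree_ball K L"
  shows "AE \<omega> in MM K L. den K b E \<omega> (L - length y) y \<noteq> 0"
proof -
  define n where "n = L - length y"
  have ln: "length y + n = L" using y by (auto simp: n_def tree_ball_def)
  note dm[measurable] = den_meas[OF y ln, of b E]
  define f where "f \<omega> = (if den K b E \<omega> n y = 0 then 1 else 0 :: ennreal)" for \<omega>
  have fm[measurable]: "f \<in> borel_measurable (MM K L)" unfolding f_def by measurable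
  have "(\<integral>\<^sup>+\<omega>. f \<omega> \<partial>MM K L) \<le> 0"
  proof (rule coord1[OF y fm])
    fix \<omega>
    have "(\<lambda>w. f (\<omega> (y:=w))) = (\<lambda>w. indicator {cst K b E \<omega> n y} w)"
      by (auto simp: f_def den_upd_self indicator_def)
    then show "(\<integral>\<^sup>+w. f (\<omega> (y:=w)) \<partial>N) \<le> 0" by (simp add: point_null)
  qed
  then have "(\<integral>\<^sup>+\<omega>. f \<omega> \<partial>MM K L) = 0" by simp
  then have "AE \<omega> in MM K L. f \<omega> = 0" by (subst (asm) nn_integral_0_iff_AE) auto
  then show ?thesis by eventually_elim (auto simp: f_def n_def split: if_splits)
qed

lemma AE_good: "AE \<omega> in MM K L. good K L b E \<omega>"
proof -
  have "AE \<omega> in MM K L. \<forall>y\<in>tree_ball K L. den K b E \<omega> (L - length y) y \<noteq> 0"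
    by (rule AE_finite_allI[OF finite_tree_ball]) (rule AE_den)
  then show ?thesis by (simp add: good_def)
qed

end

context site begin
lemma prod_bound:
  assumes s: "0 \<le> s" "s \<le> 1/4" and xS: "x \<in> tree_ball K L"
  shows "(\<integral>\<^sup>+\<omega>. (\<Prod>j\<le>length x. ennreal (\<bar>gam K b E \<omega> (L - j) (drop (length x - j) x)\<bar> powr s)) \<partial>MM K L)
      \<le> ennreal (1 + 2 * s * (1 + 4 * Mr)) ^ Suc (length x)"
proof -
  define d where "d = length x"
  define X where "X j = drop (d - j) x" for j
  define Cs where "Cs = ennreal (1 + 2 * s * (1 + 4 * Mr))"
  define F where "F j \<omega> = ennreal (\<bar>gam K b E \<omega> (L - j) (X j)\<bar> powr s)" for j \<omega>
  have dL: "d \<le> L" using xS by (simp add: d_def tree_ball_def)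
  have XS: "X j \<in> tree_ball K L" for j
    using xS by (auto simp: X_def tree_ball_def dest: in_set_dropD)
  have lX: "j \<le> d \<Longrightarrow> length (X j) = j" for j by (simp add: X_def d_def)
  have Fm[measurable]: "F j \<in> borel_measurable (MM K L)" if "j \<le> d" for j
  proof -
    have [measurable]: "(\<lambda>\<omega>. gam K b E \<omega> (L - j) (X j)) \<in> borel_measurable (MM K L)"
      by (rule gam_meas[OF XS]) (use lX[OF that] dL that in simp)
    show ?thesis unfolding F_def by measurable
  qed
  have main: "(\<integral>\<^sup>+\<omega>. (\<Prod>j\<in>{k..d}. F j \<omega>) \<partial>MM K L) \<le> Cs ^ (Suc d - k)" if "k \<le> Suc d" for k
    using that
  proof (induction k rule: inc_induct)
    case base
    interpret P: prob_space "MM K L" by (rule prob_MM)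
    show ?case using P.emeasure_space_1 by simp
  next
    case (step k)
    have kd: "k \<le> d" using step(2) by simp
    have split: "{k..d} = insert k {Suc k..d}" using kd by auto
    have gm: "(\<lambda>\<omega>. \<Prod>j\<in>{Suc k..d}. F j \<omega>) \<in> borel_measurable (MM K L)"
      by (intro borel_measurable_prod_ennreal) (auto intro: Fm)
    have gi: "(\<Prod>j\<in>{Suc k..d}. F j (\<omega> (X k := w))) = (\<Prod>j\<in>{Suc k..d}. F j \<omega>)" for \<omega> w
    proof (rule prod.cong)
      fix j assume "j \<in> {Suc k..d}"
      then have "length (X k) < length (X j)" using lX kd by auto
      then show "F j (\<omega> (X k := w)) = F j \<omega>" by (simp add: F_def gam_upd_short)
    qed simp
    have "(\<integral>\<^sup>+\<omega>. (\<Prod>j\<in>{k..d}. F j \<omega>) \<partial>MM K L) = (\<integral>\<^sup>+\<omega>. F k \<omega> * (\<Prod>j\<in>{Suc k..d}. F j \<omega>) \<partial>MM K L)"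
      unfolding split by simp
    also have "\<dots> \<le> Cs * (\<integral>\<^sup>+\<omega>. (\<Prod>j\<in>{Suc k..d}. F j \<omega>) \<partial>MM K L)"
    proof (rule coord_bound[OF prob_N finite_tree_ball XS Fm[OF kd] gm gi])
      fix \<omega>
      have "(\<lambda>w. F k (\<omega> (X k := w))) = (\<lambda>w. ennreal (\<bar>1 / (w - cst K b E \<omega> (L - k) (X k))\<bar> powr s))"
        by (simp add: F_def gam_upd_self)
      then show "(\<integral>\<^sup>+w. F k (\<omega> (X k := w)) \<partial>N) \<le> Cs" using s_bound[OF s] by (simp add: Cs_def)
    qed
    also have "\<dots> \<le> Cs * Cs ^ (Suc d - Suc k)" by (intro mult_left_mono step.IH) auto
    also have "\<dots> = Cs ^ (Suc d - k)" using kd by (simp add: Suc_diff_le power_Suc[symmetric] del: power_Suc)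
    finally show ?case .
  qed
  have "{..d} = {0..d}" by auto
  then show ?thesis using main[of 0] by (simp add: F_def X_def d_def Cs_def)
qed

lemma int_bound:
  assumes [measurable]: "f \<in> borel_measurable (MM K L)" and nn: "\<And>\<omega>. 0 \<le> f \<omega>"
    and b: "(\<integral>\<^sup>+\<omega>. ennreal (f \<omega>) \<partial>MM K L) \<le> ennreal B" and B: "0 \<le> B"
  shows "integrable (MM K L) f" "integral\<^sup>L (MM K L) f \<le> B"
proof -
  show i: "integrable (MM K L) f"
    by (rule integrableI_nonneg) (use nn b in \<open>auto simp: top_unique less_top[symmetric] intro: le_less_trans\<close>)
  have "ennreal (integral\<^sup>L (MM K L) f) = (\<integral>\<^sup>+\<omega>. ennreal (f \<omega>) \<partial>MM K L)"
    by (rule nn_integral_eq_integral[symmetric]) (use i nn in auto)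
  with b have "ennreal (integral\<^sup>L (MM K L) f) \<le> ennreal B" by simp
  then show "integral\<^sup>L (MM K L) f \<le> B" using B by (simp add: ennreal_le_iff)
qed

lemma ln_term_int:
  assumes y: "y \<in> tree_ball K L"
  shows "integrable (MM K L) (\<lambda>\<omega>. ln (1 + \<bar>\<omega> y\<bar>))"
        "(\<integral>\<omega>. ln (1 + \<bar>\<omega> y\<bar>) \<partial>MM K L) \<le> 1 + Tm / tau"
proof -
  have [measurable]: "(\<lambda>\<omega>. \<omega> y) \<in> borel_measurable (MM K L)" by (rule comp_meas[OF y])
  have T0: "0 \<le> Tm" unfolding Tm_def by (rule integral_nonneg_AE) (use rho_nn in auto)
  have b: "(\<integral>\<^sup>+\<omega>. ennreal (ln (1 + \<bar>\<omega> y\<bar>)) \<partial>MM K L) \<le> ennreal (1 + Tm / tau)"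
    by (rule coord1[OF y]) (auto simp: ln_bound)
  show "integrable (MM K L) (\<lambda>\<omega>. ln (1 + \<bar>\<omega> y\<bar>))"
       "(\<integral>\<omega>. ln (1 + \<bar>\<omega> y\<bar>) \<partial>MM K L) \<le> 1 + Tm / tau"
    using int_bound[OF _ _ b] T0 tau(1) by auto
qed

lemma gam_term_int:
  assumes y: "y \<in> tree_ball K L" and ln: "length y + n = L"
  shows "integrable (MM K L) (\<lambda>\<omega>. ln (1 + \<bar>gam K b E \<omega> n y\<bar>))"
        "(\<integral>\<omega>. ln (1 + \<bar>gam K b E \<omega> n y\<bar>) \<partial>MM K L) \<le> 2 * (1 + 4 * Mr)"
proof -
  have [measurable]: "(\<lambda>\<omega>. gam K b E \<omega> n y) \<in> borel_measurable (MM K L)" by (rule gam_meas[OF y ln])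
  have b: "(\<integral>\<^sup>+\<omega>. ennreal (ln (1 + \<bar>gam K b E \<omega> n y\<bar>)) \<partial>MM K L) \<le> ennreal (2 * (1 + 4 * Mr))"
  proof (rule coord1[OF y])
    fix \<omega>
    have "(\<integral>\<^sup>+w. ennreal (ln (1 + \<bar>gam K b E (\<omega> (y:=w)) n y\<bar>)) \<partial>N)
        \<le> (\<integral>\<^sup>+w. ennreal 2 * ennreal (\<bar>1 / (w - cst K b E \<omega> n y)\<bar> powr (1/2)) \<partial>N)"
    proof (rule nn_integral_mono)
      fix w
      have "ennreal (ln (1 + \<bar>1 / (w - cst K b E \<omega> n y)\<bar>)) \<le> ennreal (2 * \<bar>1 / (w - cst K b E \<omega> n y)\<bar> powr (1/2))"
        by (rule ennreal_leI) (rule ln_sqrt_bound)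
      then show "ennreal (ln (1 + \<bar>gam K b E (\<omega> (y:=w)) n y\<bar>)) \<le> ennreal 2 * ennreal (\<bar>1 / (w - cst K b E \<omega> n y)\<bar> powr (1/2))"
        by (simp add: gam_upd_self ennreal_mult)
    qed
    also have "\<dots> = ennreal 2 * (\<integral>\<^sup>+w. ennreal (\<bar>1 / (w - cst K b E \<omega> n y)\<bar> powr (1/2)) \<partial>N)"
      by (rule nn_integral_cmult) (simp add: measurable_cong_sets[OF sets_N refl])
    also have "\<dots> \<le> ennreal 2 * ennreal (1 + 4 * Mr)" by (intro mult_left_mono half_bound) auto
    also have "\<dots> = ennreal (2 * (1 + 4 * Mr))" using Mr by (simp add: ennreal_mult)
    finally show "(\<integral>\<^sup>+w. ennreal (ln (1 + \<bar>gam K b E (\<omega> (y:=w)) n y\<bar>)) \<partial>N) \<le> ennreal (2 * (1 + 4 * Mr))" .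
  qed measurable
  show "integrable (MM K L) (\<lambda>\<omega>. ln (1 + \<bar>gam K b E \<omega> n y\<bar>))"
       "(\<integral>\<omega>. ln (1 + \<bar>gam K b E \<omega> n y\<bar>) \<partial>MM K L) \<le> 2 * (1 + 4 * Mr)"
    using int_bound[OF _ _ b] Mr by auto
qed

end

lemma one_sum_le_prod:
  fixes a :: "'i \<Rightarrow> real"
  assumes "finite A" "\<And>i. 0 \<le> a i"
  shows "1 + sum a A \<le> (\<Prod>i\<in>A. 1 + a i)"
  using assms(1)
proof (induction A rule: finite_induct)
  case empty then show ?case by simp
next
  case (insert z A)
  have p: "1 + sum a A \<le> (\<Prod>i\<in>A. 1 + a i)" by (rule insert.IH)
  have "1 + sum a (insert z A) = 1 + a z + sum a A" using insert by simp
  also have "\<dots> \<le> (1 + a z) * (1 + sum a A)" using assms(2)[of z] sum_nonneg[of A a] assms(2) by (simp add: algebra_simps)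
  also have "\<dots> \<le> (1 + a z) * (\<Prod>i\<in>A. 1 + a i)" using p assms(2)[of z] by (intro mult_left_mono) auto
  finally show ?case using insert by simp
qed

lemma ln_one_sum:
  fixes a :: "'i \<Rightarrow> real"
  assumes "finite A" "\<And>i. 0 \<le> a i"
  shows "ln (1 + sum a A) \<le> (\<Sum>i\<in>A. ln (1 + a i))"
proof -
  have pos: "0 < 1 + sum a A" using sum_nonneg[of A a] assms(2) by (smt (verit))
  have "1 + sum a A \<le> (\<Prod>i\<in>A. 1 + a i)" by (rule one_sum_le_prod) (use assms in auto)
  then have "ln (1 + sum a A) \<le> ln (\<Prod>i\<in>A. 1 + a i)"
    using pos by simp
  also have "\<dots> = (\<Sum>i\<in>A. ln (1 + a i))"
  proof (rule ln_prod)
    show "finite A" by (rule assms(1))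
    fix i show "1 + a i \<noteq> 0" using assms(2)[of i] by simp
  qed
  finally show ?thesis .
qed

definition ct :: "nat \<Rightarrow> real \<Rightarrow> real \<Rightarrow> (nat list \<Rightarrow> real) \<Rightarrow> nat \<Rightarrow> nat list \<Rightarrow> real" where
  "ct K b E \<omega> n y = (case n of 0 \<Rightarrow> 0 | Suc m \<Rightarrow> (\<Sum>i<K. ln (1 + \<bar>gam K b E \<omega> m (i#y)\<bar>)))"

lemma ln_gam_lower:
  assumes D: "den K b E \<omega> n y \<noteq> 0"
  shows "- (ln (1 + \<bar>\<omega> y\<bar>) + ln (1 + (\<bar>E\<bar> + \<bar>b\<bar>)) + ct K b E \<omega> n y) \<le> ln \<bar>gam K b E \<omega> n y\<bar>"
proof -
  define cs where "cs = (case n of 0 \<Rightarrow> 0 | Suc m \<Rightarrow> (\<Sum>i<K. \<bar>gam K b E \<omega> m (i#y)\<bar>))"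
  define u where "u = \<bar>\<omega> y\<bar>"
  define v where "v = \<bar>E\<bar> + \<bar>b\<bar>"
  have cs0: "0 \<le> cs" by (cases n) (auto simp: cs_def intro: sum_nonneg)
  have u0: "0 \<le> u" "0 \<le> v" by (auto simp: u_def v_def)
  have Db: "\<bar>den K b E \<omega> n y\<bar> \<le> u + v + cs"
  proof (cases n)
    case 0
    have "\<bar>\<omega> y + b - E\<bar> \<le> \<bar>\<omega> y + b\<bar> + \<bar>E\<bar>" by (rule abs_triangle_ineq4)
    moreover have "\<bar>\<omega> y + b\<bar> \<le> \<bar>\<omega> y\<bar> + \<bar>b\<bar>" by (rule abs_triangle_ineq)
    ultimately show ?thesis using 0 by (simp add: den_def u_def v_def cs_def)
  next
    case (Suc m)
    define Sg where "Sg = (\<Sum>i<K. gam K b E \<omega> m (i#y))"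
    have "\<bar>Sg\<bar> \<le> (\<Sum>i<K. \<bar>gam K b E \<omega> m (i#y)\<bar>)" unfolding Sg_def by (rule sum_abs)
    moreover have "\<bar>\<omega> y - E - Sg\<bar> \<le> \<bar>\<omega> y - E\<bar> + \<bar>Sg\<bar>" by (rule abs_triangle_ineq4)
    moreover have "\<bar>\<omega> y - E\<bar> \<le> \<bar>\<omega> y\<bar> + \<bar>E\<bar>" by (rule abs_triangle_ineq4)
    moreover have "den K b E \<omega> n y = \<omega> y - E - Sg" using Suc by (simp add: den_def Sg_def)
    moreover have "cs = (\<Sum>i<K. \<bar>gam K b E \<omega> m (i#y)\<bar>)" using Suc by (simp add: cs_def)
    moreover have "0 \<le> \<bar>b\<bar>" by simp
    ultimately show ?thesis unfolding u_def v_def by linarith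
  qed
  have lcs: "ln (1 + cs) \<le> ct K b E \<omega> n y"
  proof (cases n)
    case 0 then show ?thesis by (simp add: cs_def ct_def)
  next
    case (Suc m)
    then show ?thesis unfolding cs_def ct_def
      using ln_one_sum[of "{..<K}" "\<lambda>i. \<bar>gam K b E \<omega> m (i#y)\<bar>"] by simp
  qed
  have ex: "(1 + u) * (1 + v) * (1 + cs) = 1 + u + v + cs + (u * v + u * cs + v * cs + u * v * cs)"
    by (simp add: algebra_simps)
  have "0 \<le> u * v + u * cs + v * cs + u * v * cs" using u0 cs0 by simp
  then have "1 + \<bar>den K b E \<omega> n y\<bar> \<le> (1 + u) * (1 + v) * (1 + cs)"
    using Db ex by linarith
  then have "ln (1 + \<bar>den K b E \<omega> n y\<bar>) \<le> ln ((1 + u) * (1 + v) * (1 + cs))" by simp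
  also have "\<dots> = ln (1 + u) + ln (1 + v) + ln (1 + cs)"
    using u0 cs0 by (simp add: ln_mult add_pos_nonneg)
  finally have A: "ln (1 + \<bar>den K b E \<omega> n y\<bar>) \<le> ln (1 + u) + ln (1 + v) + ln (1 + cs)" .
  have "ln \<bar>den K b E \<omega> n y\<bar> \<le> ln (1 + \<bar>den K b E \<omega> n y\<bar>)" using D by simp
  moreover have "ln \<bar>gam K b E \<omega> n y\<bar> = - ln \<bar>den K b E \<omega> n y\<bar>"
    using D by (simp add: gam_den ln_div)
  ultimately show ?thesis using A lcs by (simp add: u_def v_def)
qed

lemma green_abs:
  assumes "x \<in> tree_ball K L" "good K L b E \<omega>"
  shows "\<bar>green K L b \<omega> E x\<bar> = (\<Prod>j\<le>length x. \<bar>gam K b E \<omega> (L - j) (drop (length x - j) x)\<bar>)"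
proof -
  interpret pathctx K L b E \<omega> x using assms by unfold_locales
  have "\<bar>green K L b \<omega> E x\<bar> = \<bar>tt\<bar>" by (simp add: green_formula)
  also have "\<dots> = (\<Prod>j\<le>d. \<bar>1 / dj j\<bar>)" by (simp add: tt_def abs_prod prod_dividef abs_mult power_abs)
  also have "\<dots> = (\<Prod>j\<le>d. \<bar>gj j\<bar>)" by (simp add: gj_def dj_def gam_den)
  finally show ?thesis by (simp add: gj_def xs_def)
qed


context site
begin
lemma ct_int:
  assumes y: "y \<in> tree_ball K L" and ln: "length y + n = L"
  shows "integrable (MM K L) (\<lambda>\<omega>. ct K b E \<omega> n y)"
        "(\<integral>\<omega>. ct K b E \<omega> n y \<partial>MM K L) \<le> K * (2 * (1 + 4 * Mr))"
proof -
  have "integrable (MM K L) (\<lambda>\<omega>. ct K b E \<omega> n y) \<and> (\<integral>\<omega>. ct K b E \<omega> n y \<partial>MM K L) \<le> K * (2 * (1 + 4 * Mr))"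
  proof (cases n)
    case 0 then show ?thesis using Mr by (simp add: ct_def)
  next
    case (Suc m)
    have c: "i # y \<in> tree_ball K L" "length (i#y) + m = L" if "i < K" for i
      using y ln Suc that by (auto simp: tree_ball_def)
    have I: "integrable (MM K L) (\<lambda>\<omega>. \<Sum>i<K. ln (1 + \<bar>gam K b E \<omega> m (i#y)\<bar>))"
      using gam_term_int(1)[OF c] by (intro Bochner_Integration.integrable_sum) auto
    have "(\<integral>\<omega>. (\<Sum>i<K. ln (1 + \<bar>gam K b E \<omega> m (i#y)\<bar>)) \<partial>MM K L)
        = (\<Sum>i<K. (\<integral>\<omega>. ln (1 + \<bar>gam K b E \<omega> m (i#y)\<bar>) \<partial>MM K L))"
      using gam_term_int(1)[OF c] by (intro Bochner_Integration.integral_sum) auto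
    also have "\<dots> \<le> (\<Sum>i<K. 2 * (1 + 4 * Mr))"
      using gam_term_int(2)[OF c] by (intro sum_mono) auto
    finally show ?thesis using I Suc by (simp add: ct_def)
  qed
  then show "integrable (MM K L) (\<lambda>\<omega>. ct K b E \<omega> n y)"
        "(\<integral>\<omega>. ct K b E \<omega> n y \<partial>MM K L) \<le> K * (2 * (1 + 4 * Mr))" by auto
qed

definition "Fn K L b E x \<omega> = (\<Sum>j\<le>length x. ln (1 + \<bar>\<omega> (drop (length x - j) x)\<bar>) + ln (1 + (\<bar>E\<bar> + \<bar>b\<bar>))
     + ct K b E \<omega> (L - j) (drop (length x - j) x))"

lemma Fn_int:
  assumes xS: "x \<in> tree_ball K L"
  shows "integrable (MM K L) (Fn K L b E x)"
        "(\<integral>\<omega>. Fn K L b E x \<omega> \<partial>MM K L) \<le> Suc (length x) * (1 + Tm / tau + ln (1 + (\<bar>E\<bar> + \<bar>b\<bar>)) + K * (2 * (1 + 4 * Mr)))"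
proof -
  interpret P: prob_space "MM K L" by (rule prob_MM)
  define d where "d = length x"
  define X where "X j = drop (d - j) x" for j
  define B where "B = 1 + Tm / tau + ln (1 + (\<bar>E\<bar> + \<bar>b\<bar>)) + K * (2 * (1 + 4 * Mr))"
  have dL: "d \<le> L" using xS by (simp add: d_def tree_ball_def)
  have XS: "X j \<in> tree_ball K L" for j
    using xS by (auto simp: X_def tree_ball_def dest: in_set_dropD)
  have lX: "j \<le> d \<Longrightarrow> length (X j) + (L - j) = L" for j using dL by (simp add: X_def d_def)
  define t where "t j \<omega> = ln (1 + \<bar>\<omega> (X j)\<bar>) + ln (1 + (\<bar>E\<bar> + \<bar>b\<bar>)) + ct K b E \<omega> (L - j) (X j)" for j \<omega>
  have Fe: "Fn K L b E x = (\<lambda>\<omega>. \<Sum>j\<le>d. t j \<omega>)" by (simp add: Fn_def t_def X_def d_def fun_eq_iff)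
  have ti: "integrable (MM K L) (t j)" if "j \<le> d" for j
    unfolding t_def using ln_term_int(1)[OF XS] ct_int(1)[OF XS lX[OF that]] by auto
  have tb: "(\<integral>\<omega>. t j \<omega> \<partial>MM K L) \<le> B" if "j \<le> d" for j
  proof -
    have "(\<integral>\<omega>. t j \<omega> \<partial>MM K L) = (\<integral>\<omega>. ln (1 + \<bar>\<omega> (X j)\<bar>) \<partial>MM K L) + ln (1 + (\<bar>E\<bar> + \<bar>b\<bar>))
        + (\<integral>\<omega>. ct K b E \<omega> (L - j) (X j) \<partial>MM K L)"
      unfolding t_def using ln_term_int(1)[OF XS] ct_int(1)[OF XS lX[OF that]]
      by (simp add: P.prob_space)
    then show ?thesis using ln_term_int(2)[OF XS, of j] ct_int(2)[OF XS lX[OF that], of b E] by (simp add: B_def)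
  qed
  show "integrable (MM K L) (Fn K L b E x)" unfolding Fe using ti by (intro Bochner_Integration.integrable_sum) auto
  have "(\<integral>\<omega>. Fn K L b E x \<omega> \<partial>MM K L) = (\<Sum>j\<le>d. (\<integral>\<omega>. t j \<omega> \<partial>MM K L))"
    unfolding Fe using ti by (intro Bochner_Integration.integral_sum) auto
  also have "\<dots> \<le> (\<Sum>j\<le>d. B)" using tb by (intro sum_mono) auto
  finally show "(\<integral>\<omega>. Fn K L b E x \<omega> \<partial>MM K L) \<le> Suc (length x) * (1 + Tm / tau + ln (1 + (\<bar>E\<bar> + \<bar>b\<bar>)) + K * (2 * (1 + 4 * Mr)))"
    by (simp add: B_def d_def)
qed

end

context site
begin
lemma Phi_bound:
  assumes xS: "x \<in> tree_ball K L" and s: "0 < s" "s \<le> 1/4"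
  shows "ln (\<integral>\<omega>. \<bar>green K L b \<omega> E x\<bar> powr s \<partial>MM K L) \<le> Suc (length x) * (2 * s * (1 + 4 * Mr))"
proof -
  define Cs where "Cs = 1 + 2 * s * (1 + 4 * Mr)"
  define \<Phi> where "\<Phi> = (\<integral>\<omega>. \<bar>green K L b \<omega> E x\<bar> powr s \<partial>MM K L)"
  have Cs1: "1 \<le> Cs" using s Mr by (simp add: Cs_def)
  have P0: "0 \<le> \<Phi>" unfolding \<Phi>_def by (rule integral_nonneg_AE) auto
  have PC: "\<Phi> \<le> Cs ^ Suc (length x)"
  proof (cases "integrable (MM K L) (\<lambda>\<omega>. \<bar>green K L b \<omega> E x\<bar> powr s)")
    case True
    have "ennreal \<Phi> = (\<integral>\<^sup>+\<omega>. ennreal (\<bar>green K L b \<omega> E x\<bar> powr s) \<partial>MM K L)"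
      unfolding \<Phi>_def by (rule nn_integral_eq_integral[symmetric]) (use True in auto)
    also have "\<dots> = (\<integral>\<^sup>+\<omega>. (\<Prod>j\<le>length x. ennreal (\<bar>gam K b E \<omega> (L - j) (drop (length x - j) x)\<bar> powr s)) \<partial>MM K L)"
    proof (rule nn_integral_cong_AE)
      show "AE \<omega> in MM K L. ennreal (\<bar>green K L b \<omega> E x\<bar> powr s) =
          (\<Prod>j\<le>length x. ennreal (\<bar>gam K b E \<omega> (L - j) (drop (length x - j) x)\<bar> powr s))"
        using AE_good[of K L b E]
      proof eventually_elim
        case (elim \<omega>)
        show ?case using green_abs[OF xS elim]
          by (simp add: prod_powr_distrib prod_ennreal)
      qed
    qed
    also have "\<dots> \<le> ennreal Cs ^ Suc (length x)"
      unfolding Cs_def by (rule prod_bound[OF _ _ xS]) (use s in auto)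
    also have "\<dots> = ennreal (Cs ^ Suc (length x))" using Cs1 by (intro ennreal_power) simp
    finally show ?thesis using Cs1 by (subst (asm) ennreal_le_iff) auto
  next
    case False
    then have "\<Phi> = 0" unfolding \<Phi>_def by (rule not_integrable_integral_eq)
    then show ?thesis using Cs1 by simp
  qed
  show ?thesis
  proof (cases "\<Phi> = 0")
    case True
    then show ?thesis using s Mr by (simp add: \<Phi>_def[symmetric])
  next
    case False
    then have "0 < \<Phi>" using P0 by simp
    then have "ln \<Phi> \<le> ln (Cs ^ Suc (length x))" using PC by simp
    also have "\<dots> = Suc (length x) * ln Cs" using Cs1 by (subst ln_realpow) auto
    also have "\<dots> \<le> Suc (length x) * (Cs - 1)"
      using ln_le_minus_one[of Cs] Cs1 by (intro mult_left_mono) auto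
    finally show ?thesis by (simp add: \<Phi>_def Cs_def)
  qed
qed

lemma Lambda_bound:
  assumes xS: "x \<in> tree_ball K L"
  shows "- (Suc (length x) * (1 + Tm / tau + ln (1 + (\<bar>E\<bar> + \<bar>b\<bar>)) + K * (2 * (1 + 4 * Mr))))
     \<le> (\<integral>\<omega>. ln \<bar>green K L b \<omega> E x\<bar> \<partial>MM K L)"
proof (cases "integrable (MM K L) (\<lambda>\<omega>. ln \<bar>green K L b \<omega> E x\<bar>)")
  case True
  have "(\<integral>\<omega>. - Fn K L b E x \<omega> \<partial>MM K L) \<le> (\<integral>\<omega>. ln \<bar>green K L b \<omega> E x\<bar> \<partial>MM K L)"
  proof (rule integral_mono_AE)
    show "integrable (MM K L) (\<lambda>\<omega>. - Fn K L b E x \<omega>)" using Fn_int(1)[OF xS] by simp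
    show "integrable (MM K L) (\<lambda>\<omega>. ln \<bar>green K L b \<omega> E x\<bar>)" by (rule True)
    show "AE \<omega> in MM K L. - Fn K L b E x \<omega> \<le> ln \<bar>green K L b \<omega> E x\<bar>"
      using AE_good[of K L b E]
    proof eventually_elim
      case (elim \<omega>)
      define X where "X j = drop (length x - j) x" for j
      have XS: "X j \<in> tree_ball K L" for j
        using xS by (auto simp: X_def tree_ball_def dest: in_set_dropD)
      have lX: "j \<le> length x \<Longrightarrow> length (X j) = j" for j by (simp add: X_def)
      have D: "j \<le> length x \<Longrightarrow> den K b E \<omega> (L - j) (X j) \<noteq> 0" for j
        using elim XS[of j] lX[of j] by (auto simp: good_def)
      have "ln \<bar>green K L b \<omega> E x\<bar> = ln (\<Prod>j\<le>length x. \<bar>gam K b E \<omega> (L - j) (X j)\<bar>)"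
        using green_abs[OF xS elim] by (simp add: X_def)
      also have "\<dots> = (\<Sum>j\<le>length x. ln \<bar>gam K b E \<omega> (L - j) (X j)\<bar>)"
        by (rule ln_prod) (use D in \<open>auto simp: gam_den\<close>)
      also have "\<dots> \<ge> (\<Sum>j\<le>length x. - (ln (1 + \<bar>\<omega> (X j)\<bar>) + ln (1 + (\<bar>E\<bar> + \<bar>b\<bar>)) + ct K b E \<omega> (L - j) (X j)))"
        using ln_gam_lower[OF D] by (intro sum_mono) auto
      finally show ?case unfolding sum_negf Fn_def X_def .
    qed
  qed
  moreover have "(\<integral>\<omega>. - Fn K L b E x \<omega> \<partial>MM K L) = - (\<integral>\<omega>. Fn K L b E x \<omega> \<partial>MM K L)" by simp
  ultimately show ?thesis using Fn_int(2)[OF xS, of b E] by linarith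
next
  case False
  have "0 \<le> Tm" unfolding Tm_def by (rule integral_nonneg_AE) (use rho_nn in auto)
  then have "0 \<le> 1 + Tm / tau + ln (1 + (\<bar>E\<bar> + \<bar>b\<bar>)) + K * (2 * (1 + 4 * Mr))"
    using tau(1) Mr by (intro add_nonneg_nonneg) auto
  then show ?thesis using False by (simp add: not_integrable_integral_eq)
qed

end


theorem lemma3p4:
  fixes K :: nat and b :: real and \<rho> :: "real \<Rightarrow> real" and I :: "real set"
  assumes "K \<ge> 2"
    and "assumption_A1 \<rho>"
    and "I \<in> sets borel" and "bounded I"
  shows "\<forall>\<epsilon>>0. \<exists>s\<epsilon>. 0 < s\<epsilon> \<and> s\<epsilon> < 1/2 \<and> (\<exists>L\<epsilon>::nat.
           \<forall>s E L x. 0 < s \<and> s < s\<epsilon> \<and> E \<in> I \<and> L \<ge> L\<epsilon> \<and> x \<in> tree_ball K L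
             \<and> tree_dist0 x \<ge> L\<epsilon> \<longrightarrow>
             ln (\<integral>\<omega>. \<bar>green K L b \<omega> E x\<bar> powr s \<partial>pot_measure \<rho> K L)
               \<le> \<epsilon> * real (tree_dist0 x)
                  + s * (\<integral>\<omega>. ln \<bar>green K L b \<omega> E x\<bar> \<partial>pot_measure \<rho> K L))"
proof (intro allI impI)
  fix \<epsilon> :: real assume ep: "0 < \<epsilon>"
  interpret site \<rho> by unfold_locales (rule assms(2))
  obtain R0 where R0: "\<forall>E\<in>I. norm E \<le> R0" using assms(4) by (auto simp: bounded_iff)
  define R where "R = max R0 0"
  have R: "\<And>E. E \<in> I \<Longrightarrow> \<bar>E\<bar> \<le> R" "0 \<le> R" using R0 by (auto simp: R_def)
  define A where "A = 1 + 4 * Mr"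
  define B0 where "B0 = 1 + Tm / tau + (R + \<bar>b\<bar>) + K * (2 * A)"
  have A1: "1 \<le> A" using Mr by (simp add: A_def)
  have T0: "0 \<le> Tm" unfolding Tm_def by (rule integral_nonneg_AE) (use rho_nn in auto)
  have B00: "0 \<le> B0" using A1 T0 tau(1) R(2) by (simp add: B0_def)
  define Q where "Q = 4 * A + 2 * B0 + 1"
  have Q: "0 < Q" using A1 B00 by (simp add: Q_def)
  define se where "se = min (1/4) (\<epsilon> / Q)"
  have se: "0 < se" "se < 1/2" using ep Q by (auto simp: se_def)
  show "\<exists>s\<epsilon>. 0 < s\<epsilon> \<and> s\<epsilon> < 1/2 \<and> (\<exists>L\<epsilon>::nat.
           \<forall>s E L x. 0 < s \<and> s < s\<epsilon> \<and> E \<in> I \<and> L \<ge> L\<epsilon> \<and> x \<in> tree_ball K L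
             \<and> tree_dist0 x \<ge> L\<epsilon> \<longrightarrow>
             ln (\<integral>\<omega>. \<bar>green K L b \<omega> E x\<bar> powr s \<partial>pot_measure \<rho> K L)
               \<le> \<epsilon> * real (tree_dist0 x)
                  + s * (\<integral>\<omega>. ln \<bar>green K L b \<omega> E x\<bar> \<partial>pot_measure \<rho> K L))"
  proof (intro exI conjI allI impI)
    show "0 < se" "se < 1/2" by (rule se(1), rule se(2))
    fix s E L x
    assume H: "0 < s \<and> s < se \<and> E \<in> I \<and> L \<ge> (1::nat) \<and> x \<in> tree_ball K L \<and> tree_dist0 x \<ge> 1"
    then have s: "0 < s" "s \<le> 1/4" "s < \<epsilon> / Q" and EI: "E \<in> I" and xS: "x \<in> tree_ball K L"
      and d1: "1 \<le> length x" by (auto simp: se_def tree_dist0_def)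
    define d where "d = real (length x)"
    have d: "1 \<le> d" using d1 by (simp add: d_def)
    define \<Phi> where "\<Phi> = (\<integral>\<omega>. \<bar>green K L b \<omega> E x\<bar> powr s \<partial>MM K L)"
    define \<Lambda> where "\<Lambda> = (\<integral>\<omega>. ln \<bar>green K L b \<omega> E x\<bar> \<partial>MM K L)"
    have P: "ln \<Phi> \<le> (d + 1) * (2 * s * A)"
      using Phi_bound[OF xS s(1,2), of b E] by (simp add: \<Phi>_def A_def d_def add.commute)
    have lnE: "ln (1 + (\<bar>E\<bar> + \<bar>b\<bar>)) \<le> R + \<bar>b\<bar>"
      using ln_add_one_self_le_self[of "\<bar>E\<bar> + \<bar>b\<bar>"] R(1)[OF EI] by simp
    have "- ((d + 1) * B0) \<le> - ((d + 1) * (1 + Tm / tau + ln (1 + (\<bar>E\<bar> + \<bar>b\<bar>)) + K * (2 * (1 + 4 * Mr))))"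
      using lnE d by (simp add: B0_def A_def)
    also have "\<dots> \<le> \<Lambda>" using Lambda_bound[OF xS, where b=b and E=E] by (simp add: \<Lambda>_def d_def add.commute)
    finally have Lb: "- ((d + 1) * B0) \<le> \<Lambda>" .
    have sL: "- (s * ((d + 1) * B0)) \<le> s * \<Lambda>" using mult_left_mono[OF Lb, of s] s(1) by simp
    have sQ: "s * Q \<le> \<epsilon>" using s(3) Q by (simp add: field_simps)
    have key: "(d + 1) * (2 * s * A) + s * ((d + 1) * B0) \<le> \<epsilon> * d"
    proof -
      have "(d + 1) * (2 * s * A) + s * ((d + 1) * B0) = (d + 1) * (s * (2 * A + B0))" by (simp add: algebra_simps)
      also have "\<dots> \<le> (2 * d) * (s * (2 * A + B0))"
        using d s(1) A1 B00 by (intro mult_right_mono) auto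
      also have "\<dots> = d * (s * (4 * A + 2 * B0))" by (simp add: algebra_simps)
      also have "\<dots> \<le> d * \<epsilon>"
        using sQ d s(1) by (intro mult_left_mono) (auto simp: Q_def algebra_simps)
      finally show ?thesis by (simp add: mult.commute)
    qed
    have "ln \<Phi> \<le> \<epsilon> * d + s * \<Lambda>" using P sL key by linarith
    then show "ln (\<integral>\<omega>. \<bar>green K L b \<omega> E x\<bar> powr s \<partial>pot_measure \<rho> K L)
               \<le> \<epsilon> * real (tree_dist0 x) + s * (\<integral>\<omega>. ln \<bar>green K L b \<omega> E x\<bar> \<partial>pot_measure \<rho> K L)"
      by (simp add: \<Phi>_def \<Lambda>_def d_def tree_dist0_def MM_pot)
  qed
qed


end
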